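(* Assume (A1)–(A3). If $m_2<0$, then for every $k\ge0$ there exist $\tilde C>0$ and $\tilde\delta>0$ such that for all $i\ge k_0$, $j\in\{0,\dots,k_0-1\}$ and $\ell\ge0$, \[\mathbb P_{(i,j)}\bigl(Y(T^k)=\ell,\ T^k<\tau\bigr)\le\tilde C\exp(-\tilde\delta(i+\ell)),\] where $T^k=\inf\{n>0: X(n)\le\max(k_0-1,k)\}$ and $\tau=\inf\{n>0: Y(n)<k_0\}$.
   Context: Let $\mathbb N=\{0,1,2,\dots\}$ and fix an integer $k_0\ge1$. Let $\mu$, $\mu'_j$ ($0\le j<k_0$), $\mu''_i$ ($0\le i<k_0$), $\mu_{ij}$ ($0\le i,j<k_0$) be probability measures on $\mathbb Z^2$. The random walk $Z=(X(n),Y(n))$ on $\mathbb N^2$ has transition probabilities $p((i,j)\to(i',j'))$ equal to $\mu(i'-i,j'-j)$ if $i,j\ge k_0$; $\mu'_j(i'-i,j'-j)$ if $i\ge k_0$, $0\le j<k_0$; $\mu''_i(i'-i,j'-j)$ if $0\le i<k_0$, $j\ge k_0$; $\mu_{ij}(i'-i,j'-j)$ if $0\le i,j<k_0$; $\mathbb P_{(i,j)}$ is its law from $(i,j)$. Assumptions: (A1) $\mu(a,b)=0$ if $a<-k_0$ or $b<-k_0$; $\mu'_j(a,b)=0$ if $a<-k_0$ or $b<-j$; $\mu''_i(a,b)=0$ if $b<-k_0$ or $a<-i$; $\mu_{ij}(a,b)=0$ if $a<-i$ or $b<-j$. (A2) There are $\delta,\gamma,C>0$ with $\sup_{(i,j)\in\mathbb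 N^2}\mathbb E_{(i,j)}[\exp(\delta(X(1)-i)+\gamma(Y(1)-j))]\le C$. (A3) The random walk $Z_0$ on $\mathbb Z^2$ with increment law $\mu$, the chain $Z_1$ on $\mathbb N\times\mathbb Z$ (transitions $\mu$ for first coordinate $\ge k_0$, $\mu''_i$ for first coordinate $i<k_0$), the chain $Z_2$ on $\mathbb Z\times\mathbb N$ (transitions $\mu$ for second coordinate $\ge k_0$, $\mu'_j$ for second coordinate $j<k_0$), and $Z$ are irreducible on their state spaces. $m_2=\sum_{(a,b)}b\mu(a,b)$. *)

theory Defs
  imports "HOL-Probability.Probability"
begin

type_synonym state = "int \<times> int"

text \<open>Increment law of the walk Z at position x (positions are encoded as integer
  pairs; the walk lives on the nonnegative quadrant).\<close>
definition lawZ :: "nat \<Rightarrow> (int\<times>int) pmf \<Rightarrow> (nat \<Rightarrow> (int\<times>int) pmf) \<Rightarrow> (nat \<Rightarrow> (int\<times>int) pmf)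
    \<Rightarrow> (nat \<Rightarrow> nat \<Rightarrow> (int\<times>int) pmf) \<Rightarrow> state \<Rightarrow> (int\<times>int) pmf" where
  "lawZ k0 \<mu> \<mu>' \<mu>'' \<mu>2 x =
     (if fst x \<ge> int k0 \<and> snd x \<ge> int k0 then \<mu>
      else if fst x \<ge> int k0 then \<mu>' (nat (snd x))
      else if snd x \<ge> int k0 then \<mu>'' (nat (fst x))
      else \<mu>2 (nat (fst x)) (nat (snd x)))"

definition law1 :: "nat \<Rightarrow> (int\<times>int) pmf \<Rightarrow> (nat \<Rightarrow> (int\<times>int) pmf) \<Rightarrow> state \<Rightarrow> (int\<times>int) pmf" where
  "law1 k0 \<mu> \<mu>'' x = (if fst x \<ge> int k0 then \<mu> else \<mu>'' (nat (fst x)))"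

definition law2 :: "nat \<Rightarrow> (int\<times>int) pmf \<Rightarrow> (nat \<Rightarrow> (int\<times>int) pmf) \<Rightarrow> state \<Rightarrow> (int\<times>int) pmf" where
  "law2 k0 \<mu> \<mu>' x = (if snd x \<ge> int k0 then \<mu> else \<mu>' (nat (snd x)))"

definition trans :: "(state \<Rightarrow> (int\<times>int) pmf) \<Rightarrow> state \<Rightarrow> state pmf" where
  "trans L x = map_pmf (\<lambda>d. (fst x + fst d, snd x + snd d)) (L x)"

definition irreducible_on :: "state set \<Rightarrow> (state \<Rightarrow> (int\<times>int) pmf) \<Rightarrow> bool" where
  "irreducible_on S L \<longleftrightarrow>
     (\<forall>x\<in>S. \<forall>y\<in>S. (x, y) \<in> {(a, b). a \<in> S \<and> b \<in> S \<and> pmf (trans L a) b > 0}\<^sup>*)"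

text \<open>first_pass L H G l n x = P_x(T = n, Z(m) \<in> G for 1 \<le> m \<le> n, Y(n) = l), where
  T = inf {n > 0. Z(n) \<in> H} (first-step decomposition of the path probability).\<close>
fun first_pass :: "(state \<Rightarrow> (int\<times>int) pmf) \<Rightarrow> state set \<Rightarrow> state set \<Rightarrow> int \<Rightarrow> nat \<Rightarrow> state \<Rightarrow> ennreal" where
  "first_pass L H G l 0 x = 0"
| "first_pass L H G l (Suc n) x =
     (\<integral>\<^sup>+ y. (if y \<notin> G then 0
               else if y \<in> H then (if n = 0 \<and> snd y = l then 1 else 0)
               else first_pass L H G l n y) \<partial>measure_pmf (trans L x))"

text \<open>P_x(Y(T) = l, T < \<tau>) with T the hitting time (n > 0) of H and
  \<tau> = inf {n > 0. Z(n) \<notin> G}.\<close>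
definition hit_before_exit :: "(state \<Rightarrow> (int\<times>int) pmf) \<Rightarrow> state set \<Rightarrow> state set \<Rightarrow> int \<Rightarrow> state \<Rightarrow> ennreal" where
  "hit_before_exit L H G l x = (\<Sum>n. first_pass L H G l n x)"

end

theory Submission
  imports Defs
begin

lemma phi_scale:
  fixes s lam :: real
  assumes s: "0 \<le> s" and l0: "0 \<le> lam" and l1: "lam \<le> 1"
  shows "exp (lam * s) - 1 - lam * s \<le> lam\<^sup>2 * (exp s - 1 - s)"
proof -
  have S: "summable (\<lambda>n. inverse (fact (n+2)) * x ^ (n+2))" for x :: real
    using summable_exp[of x, THEN summable_ignore_initial_segment[where k=2]] by simp
  have e1: "exp (lam * s) - 1 - lam * s = (\<Sum>n. inverse (fact (n + 2)) * ((lam * s) ^ (n + 2)))"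
    using exp_first_two_terms[of "lam * s"] by simp
  have e2: "exp s - 1 - s = (\<Sum>n. inverse (fact (n + 2)) * (s ^ (n + 2)))"
    using exp_first_two_terms[of "s"] by simp
  have "(\<Sum>n. inverse (fact (n + 2)) * ((lam * s) ^ (n + 2))) \<le> (\<Sum>n. lam\<^sup>2 * (inverse (fact (n + 2)) * (s ^ (n + 2))))"
  proof (rule suminf_le)
    fix n
    have "lam ^ (n+2) \<le> lam\<^sup>2"
    proof -
      have "lam ^ n \<le> 1" using l0 l1 by (simp add: power_le_one)
      then have "lam\<^sup>2 * lam ^ n \<le> lam\<^sup>2 * 1" using l0 by (intro mult_left_mono) auto
      then show ?thesis by (simp add: power_add mult.commute power2_eq_square mult.assoc)
    qed
    then have "lam ^ (n+2) * s^(n+2) \<le> lam\<^sup>2 * s^(n+2)"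
      using s by (simp add: mult_right_mono)
    then show "inverse (fact (n + 2)) * ((lam * s) ^ (n + 2)) \<le> lam\<^sup>2 * (inverse (fact (n + 2)) * (s ^ (n + 2)))"
      by (simp only: power_mult_distrib mult.assoc[symmetric] mult.commute[of _ "lam\<^sup>2"])
         (simp add: mult.assoc mult_left_mono)
  qed (use S in \<open>auto intro: summable_mult\<close>)
  also have "\<dots> = lam\<^sup>2 * (\<Sum>n. inverse (fact (n + 2)) * (s ^ (n + 2)))"
    using S[of s] by (rule suminf_mult)
  finally show ?thesis using e1 e2 by simp
qed

lemma exp_neg_quad:
  fixes s :: real
  assumes "s \<le> 0"
  shows "exp s \<le> 1 + s + s\<^sup>2/2"
proof -
  let ?f = "\<lambda>t::real. 1 + t + t\<^sup>2/2 - exp t"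
  have "?f 0 \<le> ?f s"
  proof (rule DERIV_nonpos_imp_nonincreasing[OF assms])
    fix x :: real
    show "\<exists>y. DERIV ?f x :> y \<and> y \<le> 0"
      apply (rule exI[of _ "1 + x - exp x"])
      apply (intro conjI)
       apply (auto intro!: derivative_eq_intros)[1]
      using exp_ge_add_one_self[of x] by simp
  qed
  then show ?thesis by simp
qed

lemma pointwise_quad:
  fixes x b b0 K0 :: real
  assumes b: "0 < b" "b \<le> b0" and x: "x \<ge> - K0" and K0: "K0 \<ge> 0"
  shows "exp (b * x) \<le> 1 + b * x + b\<^sup>2 * (exp (b0 * x) / b0\<^sup>2 + K0\<^sup>2 / 2)"
proof (cases "x \<ge> 0")
  case True
  have b0: "b0 > 0" using b by simp
  have h1: "exp ((b/b0) * (b0 * x)) - 1 - (b/b0) * (b0 * x) \<le> (b/b0)\<^sup>2 * (exp (b0 * x) - 1 - b0 * x)"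
    using b b0 True by (intro phi_scale) auto
  have h2: "(b/b0) * (b0 * x) = b * x" using b0 by simp
  have h3: "(b/b0)\<^sup>2 * (exp (b0 * x) - 1 - b0 * x) \<le> (b/b0)\<^sup>2 * exp (b0 * x)"
  proof -
    have "0 \<le> b0 * x" using True b0 by simp
    then show ?thesis by (intro mult_left_mono) auto
  qed
  have h4: "(b/b0)\<^sup>2 * exp (b0 * x) = b\<^sup>2 * (exp (b0 * x) / b0\<^sup>2)"
    by (simp add: power_divide)
  have h5: "0 \<le> b\<^sup>2 * (K0\<^sup>2 / 2)" by simp
  have "b\<^sup>2 * (exp (b0 * x) / b0\<^sup>2 + K0\<^sup>2 / 2) = b\<^sup>2 * (exp (b0 * x) / b0\<^sup>2) + b\<^sup>2 * (K0\<^sup>2 / 2)"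
    by (simp add: distrib_left)
  then show ?thesis using h1[unfolded h2] h3 h4 h5 by linarith
next
  case False
  have "exp (b * x) \<le> 1 + b * x + (b * x)\<^sup>2 / 2"
    using False b by (intro exp_neg_quad) (simp add: mult_nonneg_nonpos)
  moreover have "x\<^sup>2 \<le> K0\<^sup>2"
    using False x K0 by (simp add: abs_le_square_iff[symmetric] abs_if)
  then have "(b * x)\<^sup>2 / 2 \<le> b\<^sup>2 * (K0\<^sup>2 / 2)"
    by (simp add: power_mult_distrib mult_left_mono)
  moreover have "0 \<le> b\<^sup>2 * (exp (b0 * x) / b0\<^sup>2)" by simp
  moreover have "b\<^sup>2 * (exp (b0 * x) / b0\<^sup>2 + K0\<^sup>2 / 2) = b\<^sup>2 * (exp (b0 * x) / b0\<^sup>2) + b\<^sup>2 * (K0\<^sup>2 / 2)"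
    by (simp add: distrib_left)
  ultimately show ?thesis by linarith
qed

lemma exp_moment_lt1:
  fixes p :: "'a pmf" and f :: "'a \<Rightarrow> real" and K0 g E :: real
  assumes g: "g > 0" and K0: "K0 \<ge> 0" and lb: "\<And>x. x \<in> set_pmf p \<Longrightarrow> f x \<ge> - K0"
    and mom: "(\<integral>\<^sup>+x. ennreal (exp (g * f x)) \<partial>p) \<le> ennreal E"
    and neg: "measure_pmf.expectation p f < 0"
  shows "\<exists>b>0. b \<le> g \<and> (\<exists>q<1. (\<integral>\<^sup>+x. ennreal (exp (b * f x)) \<partial>p) \<le> ennreal q)"
proof -
  have ig: "integrable p (\<lambda>x. exp (g * f x))"
    by (rule integrableI_nonneg) (use mom in \<open>auto simp: top.not_eq_extremum intro: le_less_trans\<close>)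
  define D where "D x = 1 + K0 + (1 + 1/g) * exp (g * f x)" for x
  have iD: "integrable p D"
    unfolding D_def using ig by (intro Bochner_Integration.integrable_add integrable_mult_right integrable_const) auto
  have ie: "integrable p (\<lambda>x. exp (b * f x))" if "0 \<le> b" "b \<le> g" for b
  proof (rule Bochner_Integration.integrable_bound[OF iD])
    show "AE x in p. norm (exp (b * f x)) \<le> norm (D x)"
    proof (rule AE_I2)
      fix x
      have "exp (b * f x) \<le> 1 + exp (g * f x)"
      proof (cases "f x \<ge> 0")
        case True then have "b * f x \<le> g * f x" using that by (intro mult_right_mono) auto
        then show ?thesis by (smt (verit) exp_le_cancel_iff exp_gt_zero)
      next
        case False then have "b * f x \<le> 0" using that by (simp add: mult_nonneg_nonpos)
        then show ?thesis by (smt (verit) exp_le_one_iff exp_gt_zero)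
      qed
      moreover have "0 \<le> exp (g * f x) / g" using g by simp
      moreover have "(1 + 1/g) * exp (g * f x) = exp (g * f x) + exp (g * f x) / g"
        by (simp add: distrib_right)
      ultimately have "exp (b * f x) \<le> D x" unfolding D_def using K0 by linarith
      then show "norm (exp (b * f x)) \<le> norm (D x)" by simp
    qed
  qed auto
  have iF: "integrable p f"
  proof (rule Bochner_Integration.integrable_bound[OF iD])
    show "AE x in p. norm (f x) \<le> norm (D x)"
    proof (rule AE_pmfI)
      fix x assume x: "x \<in> set_pmf p"
      have "g * f x \<le> exp (g * f x)" using exp_ge_add_one_self[of "g * f x"] by linarith
      then have "f x \<le> exp (g * f x) / g" using g by (simp add: field_simps)
      moreover have "0 \<le> exp (g * f x)" by simp
      moreover have "(1 + 1/g) * exp (g * f x) = exp (g * f x) + exp (g * f x) / g"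
        by (simp add: distrib_right)
      moreover have "0 \<le> exp (g * f x) / g" using g by simp
      ultimately have "\<bar>f x\<bar> \<le> D x" unfolding D_def using K0 lb[OF x] by linarith
      then show "norm (f x) \<le> norm (D x)" by simp
    qed
  qed auto
  define b0 where "b0 = min g 1"
  have b0: "0 < b0" "b0 \<le> g" using g by (auto simp: b0_def)
  define M where "M x = exp (b0 * f x) / b0\<^sup>2 + K0\<^sup>2 / 2" for x
  have iM: "integrable p M"
    unfolding M_def using ie[of b0] b0 by (intro Bochner_Integration.integrable_add integrable_divide integrable_const) auto
  define m where "m = measure_pmf.expectation p f"
  define EM where "EM = measure_pmf.expectation p M"
  have EM0: "EM \<ge> 0" unfolding EM_def M_def by (intro integral_nonneg_AE) auto
  define b where "b = min b0 (- m / (2 * (EM + 1)))"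
  have m0: "m < 0" using neg m_def by simp
  have b: "0 < b" "b \<le> b0" using b0 m0 EM0 by (auto simp: b_def divide_neg_pos)
  have "measure_pmf.expectation p (\<lambda>x. exp (b * f x)) \<le> measure_pmf.expectation p (\<lambda>x. 1 + b * f x + b\<^sup>2 * M x)"
  proof (rule integral_mono_AE)
    show "integrable p (\<lambda>x. exp (b * f x))" using ie b b0 by auto
    show "integrable p (\<lambda>x. 1 + b * f x + b\<^sup>2 * M x)" using iF iM by auto
    show "AE x in p. exp (b * f x) \<le> 1 + b * f x + b\<^sup>2 * M x"
      by (rule AE_pmfI) (unfold M_def, rule pointwise_quad, use b lb K0 in auto)
  qed
  also have "\<dots> = 1 + b * m + b\<^sup>2 * EM"
    unfolding m_def EM_def using iF iM by (simp add: integral_add integral_mult_right)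
  also have "b\<^sup>2 * EM \<le> b * (- m / 2)"
  proof -
    have "b * EM \<le> (- m / (2 * (EM + 1))) * EM" using EM0 by (intro mult_right_mono) (auto simp: b_def)
    also have "\<dots> \<le> - m / 2" using EM0 m0 by (simp add: field_simps)
    finally have "b * (b * EM) \<le> b * (- m / 2)" using b by (intro mult_left_mono) auto
    then show ?thesis by (simp add: power2_eq_square mult.assoc)
  qed
  then have "1 + b * m + b\<^sup>2 * EM \<le> 1 + b * m / 2" by simp
  finally have E: "measure_pmf.expectation p (\<lambda>x. exp (b * f x)) \<le> 1 + b * m / 2" .
  have "(\<integral>\<^sup>+x. ennreal (exp (b * f x)) \<partial>p) = ennreal (measure_pmf.expectation p (\<lambda>x. exp (b * f x)))"
    using ie b b0 by (intro nn_integral_eq_integral) auto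
  also have "\<dots> \<le> ennreal (1 + b * m / 2)" using E by (rule ennreal_leI)
  finally show ?thesis using b b0 m0 by (intro exI[of _ b] conjI exI[of _ "1 + b * m / 2"]) (auto simp: mult_pos_neg)
qed

lemma shift_bound:
  fixes p :: "(int \<times> int) pmf" and a b c c' :: real and x y :: int and k0 :: nat
  assumes a: "a \<ge> 0" and sp: "\<And>d. d \<in> set_pmf p \<Longrightarrow> fst d \<ge> - int k0"
  shows "(\<integral>\<^sup>+d. ennreal (exp (- a * (real_of_int (x + fst d) - c) + b * (real_of_int (y + snd d) - c'))) \<partial>p)
     \<le> ennreal (exp (- a * (real_of_int x - c) + b * (real_of_int y - c')) * exp (a * real k0))
         * (\<integral>\<^sup>+d. ennreal (exp (b * real_of_int (snd d))) \<partial>p)"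
proof -
  let ?E = "exp (- a * (real_of_int x - c) + b * (real_of_int y - c')) * exp (a * real k0)"
  have "(\<integral>\<^sup>+d. ennreal (exp (- a * (real_of_int (x + fst d) - c) + b * (real_of_int (y + snd d) - c'))) \<partial>p)
     \<le> (\<integral>\<^sup>+d. ennreal ?E * ennreal (exp (b * real_of_int (snd d))) \<partial>p)"
  proof (rule nn_integral_mono_AE, rule AE_pmfI)
    fix d assume d: "d \<in> set_pmf p"
    have h: "- real_of_int (fst d) \<le> real k0" using sp[OF d] by linarith
    have "- a * real_of_int (fst d) \<le> a * real k0"
      using mult_left_mono[OF h a] by simp
    then have "exp (- a * real_of_int (fst d)) \<le> exp (a * real k0)" by simp
    then have "exp (- a * (real_of_int x - c) + b * (real_of_int y - c')) * exp (- a * real_of_int (fst d)) * exp (b * real_of_int (snd d))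
       \<le> exp (- a * (real_of_int x - c) + b * (real_of_int y - c')) * exp (a * real k0) * exp (b * real_of_int (snd d))"
      by (intro mult_right_mono mult_left_mono) auto
    moreover have "exp (- a * (real_of_int (x + fst d) - c) + b * (real_of_int (y + snd d) - c'))
       = exp (- a * (real_of_int x - c) + b * (real_of_int y - c')) * exp (- a * real_of_int (fst d)) * exp (b * real_of_int (snd d))"
    proof -
      have "- a * (real_of_int (x + fst d) - c) + b * (real_of_int (y + snd d) - c')
        = (- a * (real_of_int x - c) + b * (real_of_int y - c')) + - a * real_of_int (fst d) + b * real_of_int (snd d)"
        by (simp add: algebra_simps)
      then show ?thesis by (simp only: exp_add)
    qed
    ultimately show "ennreal (exp (- a * (real_of_int (x + fst d) - c) + b * (real_of_int (y + snd d) - c')))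
       \<le> ennreal ?E * ennreal (exp (b * real_of_int (snd d)))"
      by (simp add: ennreal_mult[symmetric] ennreal_leI)
  qed
  also have "\<dots> = ennreal ?E * (\<integral>\<^sup>+d. ennreal (exp (b * real_of_int (snd d))) \<partial>p)"
    by (rule nn_integral_cmult) auto
  finally show ?thesis .
qed

lemma fp_step:
  fixes V :: "state \<Rightarrow> ennreal"
  assumes IH: "\<And>y. y \<in> G \<Longrightarrow> y \<notin> H \<Longrightarrow> (\<Sum>m<N. first_pass L H G l m y) \<le> V y"
    and hit: "\<And>y. y \<in> H \<Longrightarrow> snd y = l \<Longrightarrow> 1 \<le> V y"
  shows "(\<Sum>m<Suc N. first_pass L H G l m z) \<le> (\<integral>\<^sup>+y. V y \<partial>measure_pmf (trans L z))"
proof -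
  define F where "F m y = (if y \<notin> G then 0
               else if y \<in> H then (if m = 0 \<and> snd y = l then 1 else 0)
               else first_pass L H G l m y)" for m y
  have "(\<Sum>m<Suc N. first_pass L H G l m z) = (\<Sum>m<N. first_pass L H G l (Suc m) z)"
    unfolding sum.lessThan_Suc_shift by simp
  also have "\<dots> = (\<Sum>m<N. \<integral>\<^sup>+y. F m y \<partial>measure_pmf (trans L z))"
    by (simp add: F_def)
  also have "\<dots> = (\<integral>\<^sup>+y. (\<Sum>m<N. F m y) \<partial>measure_pmf (trans L z))"
    by (rule nn_integral_sum[symmetric]) auto
  also have "\<dots> \<le> (\<integral>\<^sup>+y. V y \<partial>measure_pmf (trans L z))"
  proof (rule nn_integral_mono)
    fix y
    show "(\<Sum>m<N. F m y) \<le> V y"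
    proof (cases "y \<in> G")
      case False then show ?thesis by (simp add: F_def)
    next
      case G: True
      show ?thesis
      proof (cases "y \<in> H")
        case True
        show ?thesis
        proof (cases "snd y = l")
          case True
          have "(\<Sum>m<N. F m y) = (\<Sum>m<N. if m = 0 then 1 else 0)"
            using G \<open>y \<in> H\<close> True by (simp add: F_def)
          also have "\<dots> \<le> 1" by (cases N) (auto simp: sum.lessThan_Suc_shift)
          also have "\<dots> \<le> V y" using hit \<open>y \<in> H\<close> True by auto
          finally show ?thesis .
        next
          case False then show ?thesis using G \<open>y \<in> H\<close> by (simp add: F_def)
        qed
      next
        case False
        then show ?thesis using G IH[of y] by (simp add: F_def)
      qed
    qed
  qed
  finally show ?thesis .
qed

lemma exp_beta_le:
  fixes b g x :: real
  assumes "0 \<le> b" "b \<le> g"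
  shows "exp (b * x) \<le> 1 + exp (g * x)"
proof (cases "x \<ge> 0")
  case True then have "b * x \<le> g * x" using assms by (intro mult_right_mono) auto
  then show ?thesis by (smt (verit) exp_le_cancel_iff exp_gt_zero)
next
  case False then have "b * x \<le> 0" using assms by (simp add: mult_nonneg_nonpos)
  then show ?thesis by (smt (verit) exp_le_one_iff exp_gt_zero)
qed

lemma mom_bound:
  fixes p :: "(int \<times> int) pmf" and d0 g :: real and k0 :: nat
  assumes d0: "d0 \<ge> 0" and sp: "\<And>d. d \<in> set_pmf p \<Longrightarrow> fst d \<ge> - int k0"
  shows "(\<integral>\<^sup>+d. ennreal (exp (g * real_of_int (snd d))) \<partial>p)
     \<le> ennreal (exp (d0 * real k0)) * (\<integral>\<^sup>+d. ennreal (exp (d0 * real_of_int (fst d) + g * real_of_int (snd d))) \<partial>p)"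
proof -
  have "(\<integral>\<^sup>+d. ennreal (exp (g * real_of_int (snd d))) \<partial>p)
     \<le> (\<integral>\<^sup>+d. ennreal (exp (d0 * real k0)) * ennreal (exp (d0 * real_of_int (fst d) + g * real_of_int (snd d))) \<partial>p)"
  proof (rule nn_integral_mono_AE, rule AE_pmfI)
    fix d assume d: "d \<in> set_pmf p"
    have h: "- real_of_int (fst d) \<le> real k0" using sp[OF d] by linarith
    have "0 \<le> d0 * real k0 + d0 * real_of_int (fst d)"
      using mult_left_mono[OF h d0] by (simp add: algebra_simps)
    then have "exp (g * real_of_int (snd d)) \<le> exp (d0 * real k0 + (d0 * real_of_int (fst d) + g * real_of_int (snd d)))"
      by simp
    also have "\<dots> = exp (d0 * real k0) * exp (d0 * real_of_int (fst d) + g * real_of_int (snd d))"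
      by (simp only: exp_add)
    finally show "ennreal (exp (g * real_of_int (snd d)))
       \<le> ennreal (exp (d0 * real k0)) * ennreal (exp (d0 * real_of_int (fst d) + g * real_of_int (snd d)))"
      by (simp add: ennreal_mult[symmetric] ennreal_leI)
  qed
  also have "\<dots> = ennreal (exp (d0 * real k0)) * (\<integral>\<^sup>+d. ennreal (exp (d0 * real_of_int (fst d) + g * real_of_int (snd d))) \<partial>p)"
    by (rule nn_integral_cmult) auto
  finally show ?thesis .
qed

theorem lemma5p12:
  fixes k0 :: nat
    and \<mu> :: "(int \<times> int) pmf"
    and \<mu>' \<mu>'' :: "nat \<Rightarrow> (int \<times> int) pmf"
    and \<mu>2 :: "nat \<Rightarrow> nat \<Rightarrow> (int \<times> int) pmf"
  assumes k0: "k0 \<ge> 1"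
    and A1_mu: "\<And>a b. a < - int k0 \<or> b < - int k0 \<Longrightarrow> pmf \<mu> (a, b) = 0"
    and A1_mu': "\<And>j a b. j < k0 \<Longrightarrow> a < - int k0 \<or> b < - int j \<Longrightarrow> pmf (\<mu>' j) (a, b) = 0"
    and A1_mu'': "\<And>i a b. i < k0 \<Longrightarrow> b < - int k0 \<or> a < - int i \<Longrightarrow> pmf (\<mu>'' i) (a, b) = 0"
    and A1_mu2: "\<And>i j a b. i < k0 \<Longrightarrow> j < k0 \<Longrightarrow> a < - int i \<or> b < - int j \<Longrightarrow> pmf (\<mu>2 i j) (a, b) = 0"
    and A2: "\<exists>\<delta> \<gamma> C. \<delta> > 0 \<and> \<gamma> > 0 \<and> C > 0 \<and>
               (\<forall>i j::nat. (\<integral>\<^sup>+ d. ennreal (exp (\<delta> * real_of_int (fst d) + \<gamma> * real_of_int (snd d)))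
                    \<partial>measure_pmf (lawZ k0 \<mu> \<mu>' \<mu>'' \<mu>2 (int i, int j))) \<le> ennreal C)"
    and A3_Z0: "irreducible_on UNIV (\<lambda>_. \<mu>)"
    and A3_Z1: "irreducible_on {x. fst x \<ge> 0} (law1 k0 \<mu> \<mu>'')"
    and A3_Z2: "irreducible_on {x. snd x \<ge> 0} (law2 k0 \<mu> \<mu>')"
    and A3_Z: "irreducible_on {x. fst x \<ge> 0 \<and> snd x \<ge> 0} (lawZ k0 \<mu> \<mu>' \<mu>'' \<mu>2)"
    and m2_neg: "measure_pmf.expectation \<mu> (\<lambda>d. real_of_int (snd d)) < 0"
  shows "\<forall>k::nat. \<exists>Ct>0. \<exists>\<delta>t>0. \<forall>i j l::nat. i \<ge> k0 \<longrightarrow> j < k0 \<longrightarrow>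
           hit_before_exit (lawZ k0 \<mu> \<mu>' \<mu>'' \<mu>2)
             {x. fst x \<le> int (max (k0 - 1) k)} {x. snd x \<ge> int k0} (int l) (int i, int j)
           \<le> ennreal (Ct * exp (- \<delta>t * (real i + real l)))"
proof (intro allI)
  fix k :: nat
  obtain d0 g C where d0: "d0 > 0" and g: "g > 0" and C: "C > 0"
    and A2': "\<And>i j::nat. (\<integral>\<^sup>+ d. ennreal (exp (d0 * real_of_int (fst d) + g * real_of_int (snd d)))
                    \<partial>measure_pmf (lawZ k0 \<mu> \<mu>' \<mu>'' \<mu>2 (int i, int j))) \<le> ennreal C"
    using A2 by blast
  let ?L = "lawZ k0 \<mu> \<mu>' \<mu>'' \<mu>2"
  define K where "K = int (max (k0 - 1) k)"
  have Lmu: "?L z = \<mu>" if "fst z \<ge> int k0" "snd z \<ge> int k0" for z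
    using that by (simp add: lawZ_def)
  have Lmu': "?L (int i, int j) = \<mu>' j" if "i \<ge> k0" "j < k0" for i j
    using that by (simp add: lawZ_def)
  have sp: "fst d \<ge> - int k0" if "d \<in> set_pmf \<mu>" for d
  proof (rule ccontr)
    assume "\<not> fst d \<ge> - int k0"
    then have "pmf \<mu> d = 0" using A1_mu[of "fst d" "snd d"] by simp
    with that show False by (simp add: set_pmf_iff)
  qed
  have sp': "fst d \<ge> - int k0" if "d \<in> set_pmf (\<mu>' j)" "j < k0" for d j
  proof (rule ccontr)
    assume "\<not> fst d \<ge> - int k0"
    then have "pmf (\<mu>' j) d = 0" using A1_mu'[of j "fst d" "snd d"] that by simp
    with that show False by (simp add: set_pmf_iff)
  qed
  have mom: "(\<integral>\<^sup>+d. ennreal (exp (g * real_of_int (snd d))) \<partial>\<mu>) \<le> ennreal (exp (d0 * real k0) * C)"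
  proof -
    have "(\<integral>\<^sup>+d. ennreal (exp (g * real_of_int (snd d))) \<partial>\<mu>)
      \<le> ennreal (exp (d0 * real k0)) * (\<integral>\<^sup>+d. ennreal (exp (d0 * real_of_int (fst d) + g * real_of_int (snd d))) \<partial>\<mu>)"
      using d0 sp by (intro mom_bound) auto
    also have "\<dots> \<le> ennreal (exp (d0 * real k0)) * ennreal C"
      using A2'[of k0 k0] Lmu[of "(int k0, int k0)"] by (intro mult_left_mono) auto
    finally show ?thesis using C by (simp add: ennreal_mult)
  qed
  have sp2: "real_of_int (snd d) \<ge> - real k0" if "d \<in> set_pmf \<mu>" for d
  proof (rule ccontr)
    assume "\<not> real_of_int (snd d) \<ge> - real k0"
    then have "pmf \<mu> d = 0" using A1_mu[of "fst d" "snd d"] by simp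
    with that show False by (simp add: set_pmf_iff)
  qed
  have "\<exists>b>0. b \<le> g \<and> (\<exists>q<1. (\<integral>\<^sup>+d. ennreal (exp (b * real_of_int (snd d))) \<partial>\<mu>) \<le> ennreal q)"
    by (rule exp_moment_lt1[OF g _ sp2 mom m2_neg]) simp
  then obtain b q where b: "b > 0" "b \<le> g" and q: "q < 1"
    and bq: "(\<integral>\<^sup>+d. ennreal (exp (b * real_of_int (snd d))) \<partial>\<mu>) \<le> ennreal q"
    by blast
  define q' where "q' = max q (1/2)"
  have q': "0 < q'" "q' < 1" "ennreal q \<le> ennreal q'" using q by (auto simp: q'_def ennreal_leI)
  define a where "a = - ln q' / real k0"
  have lnq: "ln q' < 0" using q' by simp
  have a: "a > 0" using lnq k0 by (simp add: a_def divide_neg_pos)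
  have ea: "exp (a * real k0) * q' = 1"
  proof -
    have "a * real k0 = - ln q'" using k0 by (simp add: a_def)
    then show ?thesis using q' by (simp add: exp_minus exp_ln)
  qed
  define Ct where "Ct = exp (a * real_of_int K + b * real k0 + a * real k0) * (1 + exp (d0 * real k0) * C)"
  define dt where "dt = min a b"
  have Ct: "Ct > 0" unfolding Ct_def using C by (intro mult_pos_pos) (auto intro: add_pos_nonneg)
  have dt: "dt > 0" using a b by (simp add: dt_def)
  show "\<exists>Ct>0. \<exists>\<delta>t>0. \<forall>i j l::nat. i \<ge> k0 \<longrightarrow> j < k0 \<longrightarrow>
           hit_before_exit (lawZ k0 \<mu> \<mu>' \<mu>'' \<mu>2)
             {x. fst x \<le> int (max (k0 - 1) k)} {x. snd x \<ge> int k0} (int l) (int i, int j)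
           \<le> ennreal (Ct * exp (- \<delta>t * (real i + real l)))"
  proof (rule exI[of _ Ct], rule conjI[OF Ct], rule exI[of _ dt], rule conjI[OF dt], intro allI impI)
    fix i j l :: nat assume i: "k0 \<le> i" and j: "j < k0"
    define H where "H = {x::state. fst x \<le> int (max (k0 - 1) k)}"
    define G where "G = {x::state. snd x \<ge> int k0}"
    define V where "V z = ennreal (exp (- a * (real_of_int (fst z) - real_of_int K) + b * (real_of_int (snd z) - real l)))" for z :: state
    have super: "(\<integral>\<^sup>+y. V y \<partial>measure_pmf (trans ?L z)) \<le> V z" if "z \<in> G" "z \<notin> H" for z
    proof -
      have z: "fst z \<ge> int k0" "snd z \<ge> int k0" using that k0 by (auto simp: G_def H_def)
      have "(\<integral>\<^sup>+y. V y \<partial>measure_pmf (trans ?L z))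
        = (\<integral>\<^sup>+d. ennreal (exp (- a * (real_of_int (fst z + fst d) - real_of_int K) + b * (real_of_int (snd z + snd d) - real l))) \<partial>\<mu>)"
        unfolding trans_def nn_integral_map_pmf V_def Lmu[OF z] prod.sel ..
      also have "\<dots> \<le> ennreal (exp (- a * (real_of_int (fst z) - real_of_int K) + b * (real_of_int (snd z) - real l)) * exp (a * real k0))
         * (\<integral>\<^sup>+d. ennreal (exp (b * real_of_int (snd d))) \<partial>\<mu>)"
        using a sp by (intro shift_bound) auto
      also have "\<dots> \<le> ennreal (exp (- a * (real_of_int (fst z) - real_of_int K) + b * (real_of_int (snd z) - real l)) * exp (a * real k0))
         * ennreal q'"
        by (intro mult_left_mono order.trans[OF bq q'(3)]) auto
      also have "\<dots> = ennreal (exp (- a * (real_of_int (fst z) - real_of_int K) + b * (real_of_int (snd z) - real l)) * (exp (a * real k0) * q'))"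
        using q' by (simp add: ennreal_mult[symmetric] mult.assoc)
      also have "\<dots> = V z" unfolding ea V_def by simp
      finally show ?thesis .
    qed
    have hit: "1 \<le> V y" if "y \<in> H" "snd y = int l" for y
    proof -
      have "fst y \<le> K" using that by (simp add: H_def K_def)
      then have "real_of_int (fst y) - real_of_int K \<le> 0" by simp
      then have "0 \<le> - a * (real_of_int (fst y) - real_of_int K)" using a
        by (intro mult_nonpos_nonpos) auto
      then have "1 \<le> exp (- a * (real_of_int (fst y) - real_of_int K) + b * (real_of_int (snd y) - real l))"
        using that by simp
      then show ?thesis unfolding V_def using ennreal_leI by fastforce
    qed
    have interior: "\<forall>z. z \<in> G \<longrightarrow> z \<notin> H \<longrightarrow> (\<Sum>m<N. first_pass ?L H G (int l) m z) \<le> V z" for N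
    proof (induction N)
      case 0 then show ?case by simp
    next
      case (Suc N)
      show ?case
      proof (intro allI impI)
        fix z assume z: "z \<in> G" "z \<notin> H"
        have "(\<Sum>m<Suc N. first_pass ?L H G (int l) m z) \<le> (\<integral>\<^sup>+y. V y \<partial>measure_pmf (trans ?L z))"
          by (rule fp_step) (use Suc.IH hit in auto)
        also have "\<dots> \<le> V z" using super z by blast
        finally show "(\<Sum>m<Suc N. first_pass ?L H G (int l) m z) \<le> V z" .
      qed
    qed
    define E0 where "E0 = exp (- a * (real_of_int (int i) - real_of_int K) + b * (real_of_int (int j) - real l)) * exp (a * real k0)"
    have mj: "(\<integral>\<^sup>+d. ennreal (exp (b * real_of_int (snd d))) \<partial>\<mu>' j) \<le> ennreal (1 + exp (d0 * real k0) * C)"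
    proof -
      have "(\<integral>\<^sup>+d. ennreal (exp (b * real_of_int (snd d))) \<partial>\<mu>' j) \<le> (\<integral>\<^sup>+d. 1 + ennreal (exp (g * real_of_int (snd d))) \<partial>\<mu>' j)"
      proof (rule nn_integral_mono)
        fix d :: "int \<times> int"
        have "exp (b * real_of_int (snd d)) \<le> 1 + exp (g * real_of_int (snd d))"
          using b by (intro exp_beta_le) auto
        then show "ennreal (exp (b * real_of_int (snd d))) \<le> 1 + ennreal (exp (g * real_of_int (snd d)))"
          by (metis ennreal_leI ennreal_plus ennreal_1 exp_ge_zero zero_le_one)
      qed
      also have "\<dots> = 1 + (\<integral>\<^sup>+d. ennreal (exp (g * real_of_int (snd d))) \<partial>\<mu>' j)"
        by (subst nn_integral_add) auto
      also have "(\<integral>\<^sup>+d. ennreal (exp (g * real_of_int (snd d))) \<partial>\<mu>' j)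
          \<le> ennreal (exp (d0 * real k0)) * (\<integral>\<^sup>+d. ennreal (exp (d0 * real_of_int (fst d) + g * real_of_int (snd d))) \<partial>\<mu>' j)"
        using d0 sp'[OF _ j] by (intro mom_bound) auto
      also have "\<dots> \<le> ennreal (exp (d0 * real k0)) * ennreal C"
        using A2'[of i j] Lmu'[OF i j] by (intro mult_left_mono) auto
      finally show ?thesis using C by (simp add: ennreal_mult[symmetric] ennreal_plus[symmetric])
    qed
    have real_bd: "E0 * (1 + exp (d0 * real k0) * C) \<le> Ct * exp (- dt * (real i + real l))"
    proof -
      have "E0 = exp (- a * real i - b * real l + (a * real_of_int K + b * real j + a * real k0))"
        unfolding E0_def by (simp add: exp_add[symmetric] algebra_simps)
      also have "\<dots> \<le> exp (- dt * (real i + real l) + (a * real_of_int K + b * real k0 + a * real k0))"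
      proof -
        have "b * real j \<le> b * real k0" using b j by (intro mult_left_mono) auto
        moreover have "- a * real i \<le> - dt * real i" using a by (simp add: dt_def mult_right_mono)
        moreover have "- b * real l \<le> - dt * real l" using b by (simp add: dt_def mult_right_mono)
        ultimately show ?thesis by (simp add: algebra_simps)
      qed
      also have "\<dots> = exp (a * real_of_int K + b * real k0 + a * real k0) * exp (- dt * (real i + real l))"
        by (simp add: exp_add[symmetric] algebra_simps)
      finally have "E0 \<le> exp (a * real_of_int K + b * real k0 + a * real k0) * exp (- dt * (real i + real l))" .
      then have "E0 * (1 + exp (d0 * real k0) * C) \<le> exp (a * real_of_int K + b * real k0 + a * real k0) * exp (- dt * (real i + real l)) * (1 + exp (d0 * real k0) * C)"
        using C by (intro mult_right_mono) auto
      then show ?thesis unfolding Ct_def by (simp add: algebra_simps)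
    qed
    have start: "(\<Sum>m<N. first_pass ?L H G (int l) m (int i, int j)) \<le> ennreal (Ct * exp (- dt * (real i + real l)))" for N
    proof (cases N)
      case 0 then show ?thesis by simp
    next
      case (Suc N')
      have "(\<Sum>m<Suc N'. first_pass ?L H G (int l) m (int i, int j)) \<le> (\<integral>\<^sup>+y. V y \<partial>measure_pmf (trans ?L (int i, int j)))"
        by (rule fp_step) (use interior hit in auto)
      also have "\<dots> = (\<integral>\<^sup>+d. ennreal (exp (- a * (real_of_int (int i + fst d) - real_of_int K) + b * (real_of_int (int j + snd d) - real l))) \<partial>\<mu>' j)"
        unfolding trans_def nn_integral_map_pmf V_def Lmu'[OF i j] prod.sel ..
      also have "\<dots> \<le> ennreal E0 * (\<integral>\<^sup>+d. ennreal (exp (b * real_of_int (snd d))) \<partial>\<mu>' j)"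
        unfolding E0_def using a sp'[OF _ j] by (intro shift_bound) auto
      also have "\<dots> \<le> ennreal E0 * ennreal (1 + exp (d0 * real k0) * C)"
        by (intro mult_left_mono mj) auto
      also have "\<dots> = ennreal (E0 * (1 + exp (d0 * real k0) * C))"
      proof -
        have "0 \<le> E0" by (simp add: E0_def)
        moreover have "0 \<le> 1 + exp (d0 * real k0) * C" using C by (simp add: add_nonneg_nonneg)
        ultimately show ?thesis by (rule ennreal_mult[symmetric])
      qed
      also have "\<dots> \<le> ennreal (Ct * exp (- dt * (real i + real l)))"
        using real_bd by (rule ennreal_leI)
      finally show ?thesis using Suc by simp
    qed
    show "hit_before_exit ?L {x. fst x \<le> int (max (k0 - 1) k)} {x. snd x \<ge> int k0} (int l) (int i, int j)
           \<le> ennreal (Ct * exp (- dt * (real i + real l)))"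
      unfolding hit_before_exit_def H_def[symmetric] G_def[symmetric]
      by (rule suminf_le_const[OF summableI start])
  qed
qed

end
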